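(* Let $n\ge 1$, let $\bar{X}_T=(X_T^1,\dots,X_T^n)$ be a random vector with values in $[0,\infty)^n$ and $\mathbb{Q}$ a pricing measure. For $0<p<\infty$ define $$h_p(\bar{x},\bar{K},K)=\left(\left(\sum_{i=1}^{n}\big((x_i-K_i)^{+}\big)^p\right)^{1/p}-K\right)^{+},\qquad \bar{x},\bar{K}\in[0,\infty)^n,\ K\ge0,$$ let $h_\infty=\lim_{p\to\infty}h_p$ pointwise (so $h_\infty(\bar{x},\bar{K},K)=(\max_i(x_i-K_i)^+-K)^+$), and set $V^p(\bar{K},K)=\mathbb{E}_{\mathbb{Q}}[h_p(\bar{X}_T,\bar{K},K)]$ for $0<p\le\infty$. Then for every $0<p\le\infty$ and all $K_1,\dots,K_n\ge0$, $$\sum_{i=1}^{n}\ \lim_{K_j\to\infty \text{ for all } j\neq i} V^p(K_1,\dots,K_n,0)=V^1(K_1,\dots,K_n,0).$$ The analogous identity holds for the payoff functions, i.e. for every $\bar{x}\in[0,\infty)^n$, $\sum_{i=1}^n \lim_{K_j\to\infty,\, j\ne i} h_p(\bar{x},K_1,\dots,K_n,0)=h_1(\bar{x},K_1,\dots,K_n,0)$, with the limits taken pointwise.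
   Context: Market model with deterministic interest rate, normalized to zero, so the price of a European option with payoff $f(\bar{X}_T)$ is $\mathbb{E}_{\mathbb{Q}}[f(\bar{X}_T)]$ under a (not necessarily unique) pricing measure $\mathbb{Q}$; $\bar{X}_T$ is the vector of asset prices at maturity. The option prices $V^p$ are assumed finite. $y^+=\max(y,0)$. *)

theory Defs
  imports "HOL-Probability.Probability"
begin

definition pos_part :: "real \<Rightarrow> real" where
  "pos_part y = max y 0"

definition payoff :: "ereal \<Rightarrow> real ^ 'n::finite \<Rightarrow> real ^ 'n \<Rightarrow> real \<Rightarrow> real" where
  "payoff p x Kv K =
     (if p = \<infinity> then pos_part ((MAX i\<in>UNIV. pos_part (x $ i - Kv $ i)) - K)
      else pos_part ((\<Sum>i\<in>UNIV. (pos_part (x $ i - Kv $ i)) powr (real_of_ereal p))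
                       powr (1 / real_of_ereal p) - K))"

definition price :: "'a measure \<Rightarrow> ('a \<Rightarrow> real ^ 'n::finite) \<Rightarrow> ereal \<Rightarrow> real ^ 'n \<Rightarrow> real \<Rightarrow> real" where
  "price Q X p Kv K = (\<integral>\<omega>. payoff p (X \<omega>) Kv K \<partial>Q)"

definition with_coord :: "real ^ 'n \<Rightarrow> 'n \<Rightarrow> real ^ 'n \<Rightarrow> real ^ 'n" where
  "with_coord Kv i L = (\<chi> j. if j = i then Kv $ i else L $ j)"

definition others_to_infty :: "'n \<Rightarrow> (real ^ 'n) filter" where
  "others_to_infty i = (INF j\<in>UNIV - {i}. filtercomap (\<lambda>L. L $ j) at_top)"

end

theory Submission
  imports Defs
begin

lemma pp_nonneg: "pos_part y \<ge> 0" by (simp add: pos_part_def)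

lemma pp_id: "y \<ge> 0 \<Longrightarrow> pos_part y = y" by (simp add: pos_part_def)

lemma pp_mono: "a \<le> b \<Longrightarrow> pos_part a \<le> pos_part b" by (simp add: pos_part_def)

lemma payoff_nonneg: "payoff p x K K0 \<ge> 0"
  by (simp add: payoff_def pp_nonneg)

lemma payoff_one: "payoff 1 x Kv 0 = (\<Sum>i\<in>UNIV. pos_part (x $ i - Kv $ i))"
proof -
  have s: "(\<Sum>i\<in>UNIV. pos_part (x $ i - Kv $ i)) \<ge> 0" by (intro sum_nonneg pp_nonneg)
  have "(\<Sum>i\<in>UNIV. pos_part (x $ i - Kv $ i) powr 1) = (\<Sum>i\<in>UNIV. pos_part (x $ i - Kv $ i))"
    by (intro sum.cong refl powr_one pp_nonneg)
  then show ?thesis using s by (simp add: payoff_def pp_id)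
qed

lemma ereal_pos_cases:
  assumes "(p::ereal) > 0"
  obtains "p = \<infinity>" | r where "p = ereal r" "r > 0" "real_of_ereal p = r"
  using assms by (cases p) auto

lemma payoff_local:
  assumes "p > 0" "\<forall>j. j \<noteq> i \<longrightarrow> x $ j \<le> Kv $ j"
  shows "payoff p x Kv 0 = pos_part (x $ i - Kv $ i)"
proof -
  have z: "j \<noteq> i \<Longrightarrow> pos_part (x $ j - Kv $ j) = 0" for j
    using assms(2) by (simp add: pos_part_def)
  let ?a = "pos_part (x $ i - Kv $ i)"
  have a0: "?a \<ge> 0" by (rule pp_nonneg)
  from assms(1) show ?thesis
  proof (cases rule: ereal_pos_cases)
    case 1
    have "(MAX j\<in>UNIV. pos_part (x $ j - Kv $ j)) = ?a"
      by (rule Max_eqI) (auto, metis z a0 order_refl)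
    then show ?thesis using 1 a0 by (simp add: payoff_def pp_id)
  next
    case (2 r)
    have "(\<Sum>j\<in>UNIV. pos_part (x $ j - Kv $ j) powr r) = (\<Sum>j\<in>{i}. pos_part (x $ j - Kv $ j) powr r)"
      by (rule sum.mono_neutral_right) (auto simp: z)
    then have "(\<Sum>j\<in>UNIV. pos_part (x $ j - Kv $ j) powr r) = ?a powr r" by simp
    moreover have "(?a powr r) powr (1 / r) = ?a"
      using 2 a0 by (simp add: powr_powr)
    ultimately show ?thesis using 2 a0 by (simp add: payoff_def pp_id)
  qed
qed

lemma payoff_mono:
  assumes "p > 0" "\<forall>j. A $ j \<le> B $ j"
  shows "payoff p x B K \<le> payoff p x A K"
proof -
  have m: "pos_part (x $ j - B $ j) \<le> pos_part (x $ j - A $ j)" for j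
    using assms(2) by (intro pp_mono) (simp add: algebra_simps)
  from assms(1) show ?thesis
  proof (cases rule: ereal_pos_cases)
    case 1
    have "(MAX j\<in>UNIV. pos_part (x $ j - B $ j)) \<le> (MAX j\<in>UNIV. pos_part (x $ j - A $ j))"
    proof (subst Max_le_iff, simp, simp, clarify)
      fix j
      have "pos_part (x $ j - B $ j) \<le> pos_part (x $ j - A $ j)" by (rule m)
      also have "\<dots> \<le> (MAX j\<in>UNIV. pos_part (x $ j - A $ j))" by (rule Max_ge) auto
      finally show "pos_part (x $ j - B $ j) \<le> (MAX j\<in>UNIV. pos_part (x $ j - A $ j))" .
    qed
    then show ?thesis using 1 by (simp add: payoff_def pp_mono)
  next
    case (2 r)
    have "(\<Sum>j\<in>UNIV. pos_part (x $ j - B $ j) powr r) \<le> (\<Sum>j\<in>UNIV. pos_part (x $ j - A $ j) powr r)"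
      using 2 by (intro sum_mono powr_mono2 m pp_nonneg) auto
    then have "(\<Sum>j\<in>UNIV. pos_part (x $ j - B $ j) powr r) powr (1/r)
        \<le> (\<Sum>j\<in>UNIV. pos_part (x $ j - A $ j) powr r) powr (1/r)"
      using 2 by (intro powr_mono2) (auto intro: sum_nonneg)
    then show ?thesis using 2 by (simp add: payoff_def pp_mono)
  qed
qed

lemma with_coord_nth: "with_coord Kv i L $ j = (if j = i then Kv $ i else L $ j)"
  by (simp add: with_coord_def)

lemma eventually_others:
  "eventually (\<lambda>L. \<forall>j. j \<noteq> i \<longrightarrow> L $ j \<ge> t) (others_to_infty i)"
  unfolding others_to_infty_def
  apply (subst eventually_INF_finite)
   apply simp
  apply (rule exI[of _ "\<lambda>j L. t \<le> L $ j"])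
  apply (auto simp: eventually_filtercomap_at_top_linorder)
  done

lemma vn: "(X:: 'a \<Rightarrow> real^'n::finite) \<in> borel_measurable Q \<Longrightarrow> (\<lambda>w. X w $ i) \<in> borel_measurable Q"
  by (rule measurable_compose[where f=X and g="\<lambda>v. v $ i"]) (auto intro!: borel_measurable_continuous_onI continuous_intros)

lemma pp_meas: "(X:: 'a \<Rightarrow> real^'n::finite) \<in> borel_measurable Q \<Longrightarrow> (\<lambda>w. pos_part (X w $ i - c)) \<in> borel_measurable Q"
  unfolding pos_part_def by (intro borel_measurable_max borel_measurable_diff vn) auto

theorem mainTheorem2:
  fixes Q :: "'a measure" and X :: "'a \<Rightarrow> real ^ 'n::finite"
  assumes "prob_space Q"
    and "X \<in> borel_measurable Q"
    and "\<forall>\<omega>\<in>space Q. \<forall>i. X \<omega> $ i \<ge> 0"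
    and "\<And>q Kv K. q > 0 \<Longrightarrow> (\<forall>i. Kv $ i \<ge> 0) \<Longrightarrow> K \<ge> 0 \<Longrightarrow>
           integrable Q (\<lambda>\<omega>. payoff q (X \<omega>) Kv K)"
    and "p > 0"
    and "\<forall>i. Kv $ i \<ge> 0"
  shows "(\<exists>l :: 'n \<Rightarrow> real.
            (\<forall>i. ((\<lambda>L. price Q X p (with_coord Kv i L) 0) \<longlongrightarrow> l i) (others_to_infty i))
            \<and> (\<Sum>i\<in>UNIV. l i) = price Q X 1 Kv 0)
         \<and> (\<forall>x :: real ^ 'n. (\<forall>i. x $ i \<ge> 0) \<longrightarrow>
             (\<exists>l :: 'n \<Rightarrow> real.
               (\<forall>i. ((\<lambda>L. payoff p x (with_coord Kv i L) 0) \<longlongrightarrow> l i) (others_to_infty i))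
               \<and> (\<Sum>i\<in>UNIV. l i) = payoff 1 x Kv 0))"
proof
  show "\<forall>x :: real ^ 'n. (\<forall>i. x $ i \<ge> 0) \<longrightarrow>
             (\<exists>l :: 'n \<Rightarrow> real.
               (\<forall>i. ((\<lambda>L. payoff p x (with_coord Kv i L) 0) \<longlongrightarrow> l i) (others_to_infty i))
               \<and> (\<Sum>i\<in>UNIV. l i) = payoff 1 x Kv 0)"
  proof (intro allI impI)
    fix x :: "real ^ 'n"
    show "\<exists>l :: 'n \<Rightarrow> real.
               (\<forall>i. ((\<lambda>L. payoff p x (with_coord Kv i L) 0) \<longlongrightarrow> l i) (others_to_infty i))
               \<and> (\<Sum>i\<in>UNIV. l i) = payoff 1 x Kv 0"
    proof (intro exI conjI)
    show "(\<Sum>i\<in>UNIV. pos_part (x $ i - Kv $ i)) = payoff 1 x Kv 0" by (simp add: payoff_one)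
    show "\<forall>i. ((\<lambda>L. payoff p x (with_coord Kv i L) 0) \<longlongrightarrow> pos_part (x $ i - Kv $ i)) (others_to_infty i)"
    proof
      fix i
      show "((\<lambda>L. payoff p x (with_coord Kv i L) 0) \<longlongrightarrow> pos_part (x $ i - Kv $ i)) (others_to_infty i)"
        apply (rule tendsto_eventually)
        using eventually_others[of i "Max (range (\<lambda>j. x $ j))"]
        apply eventually_elim
        apply (subst payoff_local[OF assms(5)])
         apply (auto simp: with_coord_nth intro: order_trans[OF Max_ge])
        done
    qed
  qed
  qed
next
  show "\<exists>l :: 'n \<Rightarrow> real.
            (\<forall>i. ((\<lambda>L. price Q X p (with_coord Kv i L) 0) \<longlongrightarrow> l i) (others_to_infty i))
            \<and> (\<Sum>i\<in>UNIV. l i) = price Q X 1 Kv 0"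
  proof -
    define a where "a i \<omega> = pos_part (X \<omega> $ i - Kv $ i)" for i \<omega>
    define G where "G \<omega> = payoff p (X \<omega>) 0 0 + payoff 1 (X \<omega>) Kv 0" for \<omega>
    define S where "S t = {\<omega> \<in> space Q. \<exists>j. t < X \<omega> $ j}" for t
    define g where "g t \<omega> = G \<omega> * indicator (S t) \<omega>" for t \<omega>
    have int1: "integrable Q (\<lambda>\<omega>. payoff 1 (X \<omega>) Kv 0)"
      using assms(4)[of 1 Kv 0] assms(6) by simp
    have int0: "integrable Q (\<lambda>\<omega>. payoff p (X \<omega>) 0 0)"
      using assms(4)[of p 0 0] assms(5) by simp
    have intG: "integrable Q G" unfolding G_def using int0 int1 by (rule Bochner_Integration.integrable_add)
    have G0: "G \<omega> \<ge> 0" for \<omega> unfolding G_def using payoff_nonneg[of p] payoff_nonneg[of 1]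
      by (intro add_nonneg_nonneg payoff_nonneg)
    have Smeas: "S t \<in> sets Q" for t unfolding S_def using assms(2) by measurable
    have intg: "integrable Q (g t)" for t unfolding g_def using Smeas intG
      by (rule integrable_real_mult_indicator)
    have a_le: "a i \<omega> \<le> payoff 1 (X \<omega>) Kv 0" for i \<omega>
      unfolding payoff_one a_def by (rule member_le_sum) (auto intro: pp_nonneg)
    have a0: "a i \<omega> \<ge> 0" for i \<omega> unfolding a_def by (rule pp_nonneg)
    have inta: "integrable Q (a i)" for i
    proof (rule Bochner_Integration.integrable_bound[OF int1])
      show "a i \<in> borel_measurable Q" unfolding a_def[abs_def] using assms(2) by (rule pp_meas)
      show "AE \<omega> in Q. norm (a i \<omega>) \<le> norm (payoff 1 (X \<omega>) Kv 0)"
      proof (intro AE_I2)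
        fix \<omega> show "norm (a i \<omega>) \<le> norm (payoff 1 (X \<omega>) Kv 0)"
          using a_le[of i \<omega>] a0[of i \<omega>] by simp
      qed
    qed
    have gmeas: "g t \<in> borel_measurable Q" for t using intg by auto
    have h0: "((\<lambda>t. integral\<^sup>L Q (g t)) \<longlongrightarrow> integral\<^sup>L Q (\<lambda>_. 0::real)) at_top"
    proof (rule integral_dominated_convergence_at_top[where w=G])
      show "(\<lambda>_. 0::real) \<in> borel_measurable Q" by simp
      show "g t \<in> borel_measurable Q" for t by (rule gmeas)
      show "integrable Q G" by (rule intG)
      show "AE \<omega> in Q. ((\<lambda>t. g t \<omega>) \<longlongrightarrow> 0) at_top"
      proof (rule AE_I2)
        fix \<omega> assume "\<omega> \<in> space Q"
        have "eventually (\<lambda>t. g t \<omega> = 0) at_top"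
          unfolding eventually_at_top_linorder
        proof (intro exI allI impI)
          fix t assume "Max (range (\<lambda>j. X \<omega> $ j)) \<le> t"
          then have "\<omega> \<notin> S t" unfolding S_def
            using Max_ge[of "range (\<lambda>j. X \<omega> $ j)"] by (auto simp: not_less)
          then show "g t \<omega> = 0" unfolding g_def by simp
        qed
        then show "((\<lambda>t. g t \<omega>) \<longlongrightarrow> 0) at_top" by (rule tendsto_eventually)
      qed
      show "\<forall>\<^sub>F t in at_top. AE \<omega> in Q. norm (g t \<omega>) \<le> G \<omega>"
        by (intro always_eventually allI AE_I2) (simp add: g_def G0 indicator_def)
    qed
    then have h0': "((\<lambda>t. integral\<^sup>L Q (g t)) \<longlongrightarrow> 0) at_top" by simp
    have lim: "((\<lambda>L. price Q X p (with_coord Kv i L) 0) \<longlongrightarrow> integral\<^sup>L Q (a i)) (others_to_infty i)" for i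
    proof (rule tendstoI)
      fix e :: real assume e: "e > 0"
      from order_tendstoD(2)[OF h0' e] obtain T where T: "\<And>t. t \<ge> T \<Longrightarrow> integral\<^sup>L Q (g t) < e"
        unfolding eventually_at_top_linorder by blast
      define t where "t = max T 0"
      have t0: "t \<ge> 0" and tT: "integral\<^sup>L Q (g t) < e" using T unfolding t_def by auto
      show "\<forall>\<^sub>F L in others_to_infty i. dist (price Q X p (with_coord Kv i L) 0) (integral\<^sup>L Q (a i)) < e"
        using eventually_others[of i t]
      proof eventually_elim
        case (elim L)
        define c where "c = with_coord Kv i L"
        have c0: "\<forall>j. c $ j \<ge> 0" using elim t0 assms(6) by (auto simp: c_def with_coord_nth)
        have intc: "integrable Q (\<lambda>\<omega>. payoff p (X \<omega>) c 0)" using assms(4)[OF assms(5) c0] by simp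
        have pw: "\<bar>payoff p (X \<omega>) c 0 - a i \<omega>\<bar> \<le> g t \<omega>" if \<omega>: "\<omega> \<in> space Q" for \<omega>
        proof (cases "\<omega> \<in> S t")
          case True
          have "payoff p (X \<omega>) c 0 \<le> payoff p (X \<omega>) 0 0"
            using c0 by (intro payoff_mono assms(5)) simp
          then show ?thesis using True payoff_nonneg[of p "X \<omega>" c 0] a0[of i \<omega>] a_le[of i \<omega>]
            by (simp add: g_def G_def abs_le_iff)
        next
          case False
          then have "\<forall>j. X \<omega> $ j \<le> t" using \<omega> unfolding S_def by (auto simp: not_less)
          then have "\<forall>j. j \<noteq> i \<longrightarrow> X \<omega> $ j \<le> c $ j" using elim
            by (auto simp: c_def with_coord_nth intro: order_trans)
          then have "payoff p (X \<omega>) c 0 = pos_part (X \<omega> $ i - c $ i)"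
            by (rule payoff_local[OF assms(5)])
          then have "payoff p (X \<omega>) c 0 = a i \<omega>"
            by (simp add: a_def c_def with_coord_nth)
          then show ?thesis using False by (simp add: g_def)
        qed
        have "dist (price Q X p c 0) (integral\<^sup>L Q (a i)) = \<bar>integral\<^sup>L Q (\<lambda>\<omega>. payoff p (X \<omega>) c 0 - a i \<omega>)\<bar>"
          unfolding price_def dist_real_def using intc inta by simp
        also have "\<dots> \<le> integral\<^sup>L Q (\<lambda>\<omega>. \<bar>payoff p (X \<omega>) c 0 - a i \<omega>\<bar>)"
          by (rule integral_abs_bound)
        also have "\<dots> \<le> integral\<^sup>L Q (g t)"
          using intc inta intg pw by (intro integral_mono) auto
        also have "\<dots> < e" by (rule tT)
        finally show ?case unfolding c_def .
      qed
    qed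
    have "price Q X 1 Kv 0 = integral\<^sup>L Q (\<lambda>\<omega>. \<Sum>i\<in>UNIV. a i \<omega>)"
      unfolding price_def payoff_one a_def ..
    also have "\<dots> = (\<Sum>i\<in>UNIV. integral\<^sup>L Q (a i))"
      using inta by (rule Bochner_Integration.integral_sum)
    finally show ?thesis using lim by (intro exI[of _ "\<lambda>i. integral\<^sup>L Q (a i)"]) auto
  qed
qed

end
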